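(* Assume that at each bus either there is no generator or there are at least two generators ($n_i=0$ or $n_i\ge2$ for all $i$), and that the optimizer $x^*$ of the DC-OPF problem satisfies $x^*_n>0$ for all $n$. Then the inelastic electricity market game has a unique efficient Nash equilibrium $b^*$, given by $b^*_n=2a_nx^*_n+c_n$ for all $n$.
   Context: Network: a directed graph $\mathcal G=(\mathcal V,\mathcal E)$ with buses $\mathcal V=\{1,\dots,N_b\}$ and power lines $\mathcal E$; $\mathcal N_i^+=\{j:(i,j)\in\mathcal E\}$, $\mathcal N_i^-=\{j:(j,i)\in\mathcal E\}$. Each line $(i,j)$ carries flow $z_{ij}$ with limit $\bar z_{ij}>0$. There are $N$ generators; $G_i$ is the (possibly empty) set of generators at bus $i$, the $G_i$ partition $\{1,\dots,N\}$, $n_i=|G_i|$. Bus $i$ has load $y_i\ge0$. Generator $n$ has cost $f_n(x)=a_nx^2+c_nx$, $a_n>0$, $c_n\ge0$. DC-OPF: minimize $\sum_n f_n(x_n)$ s.t. $\sum_{j\in\mathcal N_i^+}z_{ij}-\sum_{j\in\mathcal N_i^-}z_{ji}=\sum_{n\in G_i}x_n-y_i$ for all $i$, $|z_{ij}|\le\bar z_{ij}$ for all $(i,j)\in\mathcal E$, $x\ge0$; assumed feasible with optimizer $(x^*,z^* )$, $x^*$ unique. S-DC-OPF given bids $b\ge0$: same constraints, objective $\sum_n b_nx_n$. Game: players are generators, actions bids $b_n\ge0$; given an optimizer $x^{\rm opt}(b)$ of S-DC-OPF chosen by the operator, payoff $u_n=b_nx^{\rm opt}_n(b)-f_n(x^{\rm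 opt}_n(b))$. Nash equilibrium: $b^*\ge0$ for which some optimizer $x^{\rm opt}(b^* )$ of S-DC-OPF$(b^* )$ satisfies, for all $n$, all $b_n\ge0$ and all optimizers $x^{\rm opt}(b_n,b^*_{-n})$ of S-DC-OPF$(b_n,b^*_{-n})$, $u_n(b_n,x^{\rm opt}_n(b_n,b^*_{-n}))\le u_n(b^*_n,x^{\rm opt}_n(b^* ))$. Efficient bid: $b^*\ge0$ such that $(x^*,z^* )$ optimizes S-DC-OPF$(b^* )$ and $x^*_n=\arg\max_{x\ge0}(b^*_nx-f_n(x))$ for all $n$. Efficient Nash equilibrium: an efficient bid that is a Nash equilibrium. *)

theory Defs
  imports Main "HOL.Real"
begin

text \<open>Buses are elements of a finite type 'b, generators elements of a finite type 'g.
  E is the set of directed lines, loc n is the bus of generator n (so G_i = {n. loc n = i},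
  which automatically partition the generators), y is the load, zbar the line limits,
  flows z are functions on pairs of buses (only values on E matter).\<close>

definition gens_at :: "('g \<Rightarrow> 'b) \<Rightarrow> 'b \<Rightarrow> 'g set" where
  "gens_at loc i = {n. loc n = i}"

definition feasible ::
  "('b \<times> 'b) set \<Rightarrow> ('g \<Rightarrow> 'b) \<Rightarrow> ('b \<Rightarrow> real) \<Rightarrow> ('b \<times> 'b \<Rightarrow> real)
   \<Rightarrow> ('g \<Rightarrow> real) \<Rightarrow> ('b \<times> 'b \<Rightarrow> real) \<Rightarrow> bool" where
  "feasible E loc y zbar x z \<longleftrightarrow>
     (\<forall>i. (\<Sum>j\<in>{j. (i, j) \<in> E}. z (i, j)) - (\<Sum>j\<in>{j. (j, i) \<in> E}. z (j, i))
          = (\<Sum>n\<in>gens_at loc i. x n) - y i)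
   \<and> (\<forall>e\<in>E. \<bar>z e\<bar> \<le> zbar e)
   \<and> (\<forall>n. 0 \<le> x n)"

definition gen_cost :: "('g \<Rightarrow> real) \<Rightarrow> ('g \<Rightarrow> real) \<Rightarrow> 'g \<Rightarrow> real \<Rightarrow> real" where
  "gen_cost a c n t = a n * t\<^sup>2 + c n * t"

definition dcopf_opt ::
  "('b \<times> 'b) set \<Rightarrow> ('g::finite \<Rightarrow> 'b) \<Rightarrow> ('b \<Rightarrow> real) \<Rightarrow> ('b \<times> 'b \<Rightarrow> real)
   \<Rightarrow> ('g \<Rightarrow> real) \<Rightarrow> ('g \<Rightarrow> real) \<Rightarrow> ('g \<Rightarrow> real) \<Rightarrow> ('b \<times> 'b \<Rightarrow> real) \<Rightarrow> bool" where
  "dcopf_opt E loc y zbar a c x z \<longleftrightarrow> feasible E loc y zbar x z \<and>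
     (\<forall>x' z'. feasible E loc y zbar x' z' \<longrightarrow>
        (\<Sum>n\<in>UNIV. gen_cost a c n (x n)) \<le> (\<Sum>n\<in>UNIV. gen_cost a c n (x' n)))"

definition sdcopf_opt ::
  "('b \<times> 'b) set \<Rightarrow> ('g::finite \<Rightarrow> 'b) \<Rightarrow> ('b \<Rightarrow> real) \<Rightarrow> ('b \<times> 'b \<Rightarrow> real)
   \<Rightarrow> ('g \<Rightarrow> real) \<Rightarrow> ('g \<Rightarrow> real) \<Rightarrow> ('b \<times> 'b \<Rightarrow> real) \<Rightarrow> bool" where
  "sdcopf_opt E loc y zbar b x z \<longleftrightarrow> feasible E loc y zbar x z \<and>
     (\<forall>x' z'. feasible E loc y zbar x' z' \<longrightarrow>
        (\<Sum>n\<in>UNIV. b n * x n) \<le> (\<Sum>n\<in>UNIV. b n * x' n))"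

definition payoff :: "('g \<Rightarrow> real) \<Rightarrow> ('g \<Rightarrow> real) \<Rightarrow> 'g \<Rightarrow> real \<Rightarrow> real \<Rightarrow> real" where
  "payoff a c n bn t = bn * t - gen_cost a c n t"

definition nash_eq ::
  "('b \<times> 'b) set \<Rightarrow> ('g::finite \<Rightarrow> 'b) \<Rightarrow> ('b \<Rightarrow> real) \<Rightarrow> ('b \<times> 'b \<Rightarrow> real)
   \<Rightarrow> ('g \<Rightarrow> real) \<Rightarrow> ('g \<Rightarrow> real) \<Rightarrow> ('g \<Rightarrow> real) \<Rightarrow> bool" where
  "nash_eq E loc y zbar a c b \<longleftrightarrow> (\<forall>n. 0 \<le> b n) \<and>
     (\<exists>xo zo. sdcopf_opt E loc y zbar b xo zo \<and>
        (\<forall>n bn x' z'. 0 \<le> bn \<longrightarrow> sdcopf_opt E loc y zbar (b(n := bn)) x' z' \<longrightarrow>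
            payoff a c n bn (x' n) \<le> payoff a c n (b n) (xo n)))"

definition efficient_bid ::
  "('b \<times> 'b) set \<Rightarrow> ('g::finite \<Rightarrow> 'b) \<Rightarrow> ('b \<Rightarrow> real) \<Rightarrow> ('b \<times> 'b \<Rightarrow> real)
   \<Rightarrow> ('g \<Rightarrow> real) \<Rightarrow> ('g \<Rightarrow> real) \<Rightarrow> ('g \<Rightarrow> real) \<Rightarrow> ('b \<times> 'b \<Rightarrow> real)
   \<Rightarrow> ('g \<Rightarrow> real) \<Rightarrow> bool" where
  "efficient_bid E loc y zbar a c xs zs b \<longleftrightarrow> (\<forall>n. 0 \<le> b n) \<and>
     sdcopf_opt E loc y zbar b xs zs \<and>
     (\<forall>n. 0 \<le> xs n \<and> (\<forall>t\<ge>0. b n * t - gen_cost a c n t \<le> b n * xs n - gen_cost a c n (xs n)))"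

end

theory Submission
  imports Defs
begin

lemma feas_conv:
  fixes x x' :: "'g::finite \<Rightarrow> real"
  assumes f1: "feasible E loc y zbar x z" and f2: "feasible E loc y zbar x' z'"
    and t0: "0 \<le> t" and t1: "t \<le> 1"
  shows "feasible E loc y zbar (\<lambda>n. (1-t)*x n + t*x' n) (\<lambda>e. (1-t)*z e + t*z' e)"
  unfolding feasible_def
proof (intro conjI allI ballI)
  fix i
  have e1: "(\<Sum>j\<in>{j. (i, j) \<in> E}. z (i, j)) - (\<Sum>j\<in>{j. (j, i) \<in> E}. z (j, i))
          = (\<Sum>n\<in>gens_at loc i. x n) - y i" using f1 unfolding feasible_def by blast
  have e2: "(\<Sum>j\<in>{j. (i, j) \<in> E}. z' (i, j)) - (\<Sum>j\<in>{j. (j, i) \<in> E}. z' (j, i))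
          = (\<Sum>n\<in>gens_at loc i. x' n) - y i" using f2 unfolding feasible_def by blast
  have s1: "(\<Sum>j\<in>{j. (i, j) \<in> E}. (1-t)*z (i, j) + t*z' (i,j)) = (1-t)*(\<Sum>j\<in>{j. (i, j) \<in> E}. z (i, j)) + t*(\<Sum>j\<in>{j. (i, j) \<in> E}. z' (i, j))"
    by (simp add: sum.distrib sum_distrib_left)
  have s2: "(\<Sum>j\<in>{j. (j, i) \<in> E}. (1-t)*z (j, i) + t*z' (j,i)) = (1-t)*(\<Sum>j\<in>{j. (j, i) \<in> E}. z (j, i)) + t*(\<Sum>j\<in>{j. (j, i) \<in> E}. z' (j, i))"
    by (simp add: sum.distrib sum_distrib_left)
  have "(\<Sum>j\<in>{j. (i, j) \<in> E}. (1-t)*z (i, j) + t*z' (i,j)) - (\<Sum>j\<in>{j. (j, i) \<in> E}. (1-t)*z (j, i) + t*z' (j,i))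
     = (1-t)*((\<Sum>j\<in>{j. (i, j) \<in> E}. z (i, j)) - (\<Sum>j\<in>{j. (j, i) \<in> E}. z (j, i)))
       + t*((\<Sum>j\<in>{j. (i, j) \<in> E}. z' (i, j)) - (\<Sum>j\<in>{j. (j, i) \<in> E}. z' (j, i)))"
    unfolding s1 s2 by (simp add: algebra_simps)
  also have "\<dots> = (1-t)*((\<Sum>n\<in>gens_at loc i. x n) - y i) + t*((\<Sum>n\<in>gens_at loc i. x' n) - y i)"
    using e1 e2 by simp
  also have "\<dots> = ((1-t)*(\<Sum>n\<in>gens_at loc i. x n) + t*(\<Sum>n\<in>gens_at loc i. x' n)) - y i"
    by (simp add: algebra_simps)
  also have "\<dots> = (\<Sum>n\<in>gens_at loc i. (1-t)*x n + t*x' n) - y i"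
    by (simp only: sum.distrib sum_distrib_left)
  finally show "(\<Sum>j\<in>{j. (i, j) \<in> E}. (1-t)*z (i, j) + t*z' (i,j)) - (\<Sum>j\<in>{j. (j, i) \<in> E}. (1-t)*z (j, i) + t*z' (j,i))
     = (\<Sum>n\<in>gens_at loc i. (1-t)*x n + t*x' n) - y i" .
next
  fix e assume "e \<in> E"
  hence a1: "\<bar>z e\<bar> \<le> zbar e" and a2: "\<bar>z' e\<bar> \<le> zbar e" using f1 f2 unfolding feasible_def by auto
  have "\<bar>(1-t)*z e + t*z' e\<bar> \<le> \<bar>(1-t)*z e\<bar> + \<bar>t*z' e\<bar>" by (rule abs_triangle_ineq)
  also have "\<dots> = (1-t)*\<bar>z e\<bar> + t*\<bar>z' e\<bar>" using t0 t1 by (simp add: abs_mult)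
  also have "\<dots> \<le> (1-t)*zbar e + t*zbar e"
    by (intro add_mono mult_left_mono) (use a1 a2 t0 t1 in auto)
  finally show "\<bar>(1-t)*z e + t*z' e\<bar> \<le> zbar e" by (simp add: algebra_simps)
next
  fix n
  have "0 \<le> x n" "0 \<le> x' n" using f1 f2 unfolding feasible_def by auto
  thus "0 \<le> (1-t)*x n + t*x' n" using t0 t1 by simp
qed

definition shift :: "('g \<Rightarrow> real) \<Rightarrow> 'g \<Rightarrow> 'g \<Rightarrow> real \<Rightarrow> 'g \<Rightarrow> real" where
  "shift x n m d = (\<lambda>k. x k - (if k = n then d else 0) + (if k = m then d else 0))"

lemma feas_shift:
  fixes x :: "'g::finite \<Rightarrow> real"
  assumes f: "feasible E loc y zbar x z" and l: "loc m = loc n" and d0: "0 \<le> d" and d1: "d \<le> x n"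
  shows "feasible E loc y zbar (shift x n m d) z"
  unfolding feasible_def
proof (intro conjI allI ballI)
  fix i
  have "(\<Sum>k\<in>gens_at loc i. shift x n m d k) = (\<Sum>k\<in>gens_at loc i. x k)
      - (if n \<in> gens_at loc i then d else 0) + (if m \<in> gens_at loc i then d else 0)"
    unfolding shift_def by (simp add: sum.distrib sum_subtractf)
  also have "\<dots> = (\<Sum>k\<in>gens_at loc i. x k)" using l by (simp add: gens_at_def)
  finally show "(\<Sum>j\<in>{j. (i, j) \<in> E}. z (i, j)) - (\<Sum>j\<in>{j. (j, i) \<in> E}. z (j, i))
          = (\<Sum>k\<in>gens_at loc i. shift x n m d k) - y i" using f unfolding feasible_def by simp
next
  fix e assume "e \<in> E" thus "\<bar>z e\<bar> \<le> zbar e" using f unfolding feasible_def by auto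
next
  fix k
  have "\<forall>k. 0 \<le> x k" using f unfolding feasible_def by auto
  thus "0 \<le> shift x n m d k" unfolding shift_def using d0 d1 by auto
qed

lemma sum_shift:
  fixes x b :: "'g::finite \<Rightarrow> real"
  shows "(\<Sum>k\<in>UNIV. b k * shift x n m d k) = (\<Sum>k\<in>UNIV. b k * x k) - b n * d + b m * d"
proof -
  have "(\<Sum>k\<in>UNIV. b k * shift x n m d k) = (\<Sum>k\<in>UNIV. b k * x k - (if k = n then b n * d else 0) + (if k = m then b m * d else 0))"
    unfolding shift_def by (rule sum.cong) (auto simp: algebra_simps)
  also have "\<dots> = (\<Sum>k\<in>UNIV. b k * x k) - b n * d + b m * d"
    by (simp add: sum.distrib sum_subtractf)
  finally show ?thesis .
qed


lemma sopt_B: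
  fixes xs :: "'g::finite \<Rightarrow> real"
  assumes opt: "dcopf_opt E loc y zbar a c xs zs" and a_pos: "\<forall>n. 0 < a n"
  shows "sdcopf_opt E loc y zbar (\<lambda>n. 2 * a n * xs n + c n) xs zs"
  unfolding sdcopf_opt_def
proof (intro conjI allI impI)
  show fxs: "feasible E loc y zbar xs zs" using opt unfolding dcopf_opt_def by blast
  fix x' z' assume f': "feasible E loc y zbar x' z'"
  define B where "B = (\<lambda>n. 2 * a n * xs n + c n)"
  define S where "S = (\<Sum>n\<in>UNIV. B n * (x' n - xs n))"
  define Q where "Q = (\<Sum>n\<in>UNIV. a n * (x' n - xs n)^2)"
  have Q0: "0 \<le> Q" unfolding Q_def using a_pos by (intro sum_nonneg) (simp add: less_imp_le)
  have key: "0 \<le> S + t * Q" if t0: "0 < t" and t1: "t \<le> 1" for t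
  proof -
    have ft: "feasible E loc y zbar (\<lambda>n. (1-t)*xs n + t*x' n) (\<lambda>e. (1-t)*zs e + t*z' e)"
      using feas_conv[OF fxs f'] t0 t1 by simp
    hence le: "(\<Sum>n\<in>UNIV. gen_cost a c n (xs n)) \<le> (\<Sum>n\<in>UNIV. gen_cost a c n ((1-t)*xs n + t*x' n))"
      using opt unfolding dcopf_opt_def by blast
    have "(\<Sum>n\<in>UNIV. gen_cost a c n ((1-t)*xs n + t*x' n)) - (\<Sum>n\<in>UNIV. gen_cost a c n (xs n))
        = (\<Sum>n\<in>UNIV. t * (B n * (x' n - xs n)) + t^2 * (a n * (x' n - xs n)^2))"
      unfolding sum_subtractf[symmetric]
      by (rule sum.cong) (auto simp: gen_cost_def B_def power2_eq_square algebra_simps)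
    also have "\<dots> = t * S + t^2 * Q" unfolding S_def Q_def
      by (simp add: sum.distrib sum_distrib_left)
    finally have "0 \<le> t * S + t^2 * Q" using le by linarith
    hence "0 \<le> t * (S + t * Q)" by (simp add: power2_eq_square algebra_simps)
    thus ?thesis using t0 by (simp add: zero_le_mult_iff)
  qed
  have "0 \<le> S"
  proof (rule ccontr)
    assume "\<not> 0 \<le> S"
    hence Sn: "S < 0" by simp
    define t where "t = min 1 (-S/(Q+1))"
    have t0: "0 < t" unfolding t_def using Sn Q0 by (simp add: divide_neg_pos)
    have t1: "t \<le> 1" unfolding t_def by simp
    have "t * Q \<le> (-S/(Q+1)) * Q" unfolding t_def using Q0 by (intro mult_right_mono) auto
    also have "\<dots> < -S" using Sn Q0 by (simp add: field_simps)
    finally show False using key[OF t0 t1] by linarith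
  qed
  moreover have "S = (\<Sum>n\<in>UNIV. B n * x' n) - (\<Sum>n\<in>UNIV. B n * xs n)"
    unfolding S_def by (simp add: right_diff_distrib sum_subtractf)
  ultimately show "(\<Sum>n\<in>UNIV. (2 * a n * xs n + c n) * xs n) \<le> (\<Sum>n\<in>UNIV. (2 * a n * xs n + c n) * x' n)"
    unfolding B_def by simp
qed


lemma interior_max:
  fixes A C X b :: real
  assumes A: "0 < A" and X: "0 < X"
    and mx: "\<forall>t\<ge>0. b * t - (A * t^2 + C * t) \<le> b * X - (A * X^2 + C * X)"
  shows "b = 2 * A * X + C"
proof -
  define d where "d = b - C - 2 * A * X"
  have gen: "d * s \<le> A * s^2" if "0 \<le> X + s" for s
  proof -
    have "b * (X+s) - (A * (X+s)^2 + C * (X+s)) \<le> b * X - (A * X^2 + C * X)"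
      using mx that by blast
    thus ?thesis unfolding d_def by (simp add: power2_eq_square algebra_simps)
  qed
  have "d = 0"
  proof (rule ccontr)
    assume dn: "d \<noteq> 0"
    show False
    proof (cases "d > 0")
      case True
      have "d * (d/(2*A)) \<le> A * (d/(2*A))^2" using gen[of "d/(2*A)"] True A X by simp
      hence "d^2/(2*A) \<le> d^2/(4*A)" using A by (simp add: power2_eq_square field_simps)
      hence "2 * d^2 \<le> d^2" using A by (simp add: field_simps)
      thus False using True by (simp add: power2_eq_square)
    next
      case False
      hence dneg: "d < 0" using dn by simp
      define e where "e = min X (-d/(2*A))"
      have e0: "0 < e" unfolding e_def using X dneg A by (simp add: divide_neg_pos)
      have eX: "e \<le> X" unfolding e_def by simp
      have ed: "e \<le> -d/(2*A)" unfolding e_def by simp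
      have "d * (-e) \<le> A * (-e)^2" using gen[of "-e"] eX by simp
      hence h: "-d * e \<le> A * e * e" by (simp add: power2_eq_square)
      have "A * e * e \<le> A * (-d/(2*A)) * e" using ed A e0 by (intro mult_right_mono mult_left_mono) auto
      also have "\<dots> = (-d * e)/2" using A by (simp add: field_simps)
      finally have "-d * e \<le> (-d*e)/2" using h by linarith
      moreover have "0 < -d * e" using dneg e0 by (simp add: mult_neg_pos)
      ultimately show False by linarith
    qed
  qed
  thus ?thesis unfolding d_def by simp
qed

lemma equal_bids:
  fixes xs B :: "'g::finite \<Rightarrow> real"
  assumes so: "sdcopf_opt E loc y zbar B xs zs" and l: "loc m = loc n" and xp: "0 < xs n"
  shows "B n \<le> B m"
proof -
  have f: "feasible E loc y zbar xs zs" using so unfolding sdcopf_opt_def by blast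
  have "feasible E loc y zbar (shift xs n m (xs n)) zs" using feas_shift[OF f l] xp by simp
  hence "(\<Sum>k\<in>UNIV. B k * xs k) \<le> (\<Sum>k\<in>UNIV. B k * shift xs n m (xs n) k)"
    using so unfolding sdcopf_opt_def by blast
  hence "0 \<le> (B m - B n) * xs n" unfolding sum_shift by (simp add: algebra_simps)
  thus ?thesis using xp by (simp add: zero_le_mult_iff)
qed

theorem corollary3p3:
  fixes E :: "('b::finite \<times> 'b) set" and loc :: "'g::finite \<Rightarrow> 'b"
    and y :: "'b \<Rightarrow> real" and zbar :: "'b \<times> 'b \<Rightarrow> real"
    and a c :: "'g \<Rightarrow> real"
    and xs :: "'g \<Rightarrow> real" and zs :: "'b \<times> 'b \<Rightarrow> real"
  assumes zbar_pos: "\<forall>e\<in>E. 0 < zbar e"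
    and y_nonneg: "\<forall>i. 0 \<le> y i"
    and a_pos: "\<forall>n. 0 < a n"
    and c_nonneg: "\<forall>n. 0 \<le> c n"
    and opt: "dcopf_opt E loc y zbar a c xs zs"
    and x_unique: "\<forall>x z. dcopf_opt E loc y zbar a c x z \<longrightarrow> x = xs"
    and gens: "\<forall>i. card (gens_at loc i) = 0 \<or> 2 \<le> card (gens_at loc i)"
    and xs_pos: "\<forall>n. 0 < xs n"
  shows "\<forall>b. (efficient_bid E loc y zbar a c xs zs b \<and> nash_eq E loc y zbar a c b)
             \<longleftrightarrow> b = (\<lambda>n. 2 * a n * xs n + c n)"
proof (intro allI iffI)
  fix b assume "efficient_bid E loc y zbar a c xs zs b \<and> nash_eq E loc y zbar a c b"
  hence mx: "\<forall>n. \<forall>t\<ge>0. b n * t - gen_cost a c n t \<le> b n * xs n - gen_cost a c n (xs n)"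
    unfolding efficient_bid_def by blast
  show "b = (\<lambda>n. 2 * a n * xs n + c n)"
  proof
    fix n
    show "b n = 2 * a n * xs n + c n"
      using interior_max[of "a n" "xs n" "b n" "c n"] mx a_pos xs_pos
      unfolding gen_cost_def by blast
  qed
next
  fix b assume bdef: "b = (\<lambda>n. 2 * a n * xs n + c n)"
  define B where "B = (\<lambda>n. 2 * a n * xs n + c n)"
  have so: "sdcopf_opt E loc y zbar B xs zs" unfolding B_def using sopt_B[OF opt a_pos] .
  have B0: "\<forall>n. 0 \<le> B n" unfolding B_def using a_pos xs_pos c_nonneg
    by (simp add: add_nonneg_nonneg less_imp_le)
  have pay_le: "payoff a c n (B n) t \<le> a n * (xs n)^2" for n t
  proof -
    have "0 \<le> a n * (t - xs n)^2" using a_pos by (simp add: less_imp_le)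
    thus ?thesis unfolding payoff_def gen_cost_def B_def by (simp add: power2_eq_square algebra_simps)
  qed
  have pay_eq: "payoff a c n (B n) (xs n) = a n * (xs n)^2" for n
    unfolding payoff_def gen_cost_def B_def by (simp add: power2_eq_square algebra_simps)
  have mxB: "\<forall>n. 0 \<le> xs n \<and> (\<forall>t\<ge>0. B n * t - gen_cost a c n t \<le> B n * xs n - gen_cost a c n (xs n))"
  proof (intro allI conjI impI)
    fix n show "0 \<le> xs n" using xs_pos less_imp_le by blast
  next
    fix n and t :: real assume "0 \<le> t"
    show "B n * t - gen_cost a c n t \<le> B n * xs n - gen_cost a c n (xs n)"
      using pay_le[of n t] pay_eq[of n] unfolding payoff_def by simp
  qed
  have eff: "efficient_bid E loc y zbar a c xs zs B"
    unfolding efficient_bid_def using B0 so mxB by blast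
  have dev: "payoff a c n bn (x' n) \<le> payoff a c n (B n) (xs n)"
    if bn0: "0 \<le> bn" and so': "sdcopf_opt E loc y zbar (B(n := bn)) x' z'" for n bn x' z'
  proof -
    have f': "feasible E loc y zbar x' z'" using so' unfolding sdcopf_opt_def by blast
    have x'0: "0 \<le> x' n" using f' unfolding feasible_def by blast
    show "payoff a c n bn (x' n) \<le> payoff a c n (B n) (xs n)"
    proof (cases "bn \<le> B n")
      case True
      have "payoff a c n bn (x' n) \<le> payoff a c n (B n) (x' n)"
        unfolding payoff_def using True x'0 by (simp add: mult_right_mono)
      thus ?thesis using pay_le[of n "x' n"] pay_eq[of n] by linarith
    next
      case False
      have nin: "n \<in> gens_at loc (loc n)" unfolding gens_at_def by simp
      have fin: "finite (gens_at loc (loc n))" by simp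
      have "card (gens_at loc (loc n)) \<noteq> 0" using nin fin by auto
      moreover have "card (gens_at loc (loc n)) = 0 \<or> 2 \<le> card (gens_at loc (loc n))" using gens by (rule spec)
      ultimately have c2: "2 \<le> card (gens_at loc (loc n))" by linarith
      have "\<not> gens_at loc (loc n) \<subseteq> {n}"
      proof
        assume "gens_at loc (loc n) \<subseteq> {n}"
        hence "card (gens_at loc (loc n)) \<le> card {n}" by (intro card_mono) auto
        thus False using c2 by simp
      qed
      then obtain m where mG: "m \<in> gens_at loc (loc n)" and mn: "m \<noteq> n" by blast
      have lm: "loc m = loc n" using mG unfolding gens_at_def by simp
      have "B n \<le> B m" using equal_bids[OF so lm] xs_pos by blast
      moreover have "B m \<le> B n" using equal_bids[OF so lm[symmetric]] xs_pos by blast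
      ultimately have Bmn: "B m = B n" by simp
      have x'z: "x' n = 0"
      proof (rule ccontr)
        assume "x' n \<noteq> 0"
        hence xp: "0 < x' n" using x'0 by simp
        have "feasible E loc y zbar (shift x' n m (x' n)) z'"
          using feas_shift[OF f' lm] xp by simp
        hence "(\<Sum>k\<in>UNIV. (B(n:=bn)) k * x' k) \<le> (\<Sum>k\<in>UNIV. (B(n:=bn)) k * shift x' n m (x' n) k)"
          using so' unfolding sdcopf_opt_def by blast
        hence "0 \<le> (B m - bn) * x' n" unfolding sum_shift using mn by (simp add: algebra_simps)
        moreover have "(B m - bn) * x' n < 0" using False Bmn xp by (simp add: mult_neg_pos)
        ultimately show False by linarith
      qed
      have "payoff a c n bn (x' n) = 0" unfolding payoff_def gen_cost_def x'z by simp
      moreover have "0 \<le> a n * (xs n)^2" using a_pos by (simp add: less_imp_le)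
      ultimately show ?thesis using pay_eq[of n] by simp
    qed
  qed
  have nash: "nash_eq E loc y zbar a c B"
    unfolding nash_eq_def using B0 so dev by blast
  show "efficient_bid E loc y zbar a c xs zs b \<and> nash_eq E loc y zbar a c b"
    using eff nash bdef B_def by simp
qed

end
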